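(* Define the following four subsets of $\mathbb{R}^5$. (1) $D_5$ is the set of all $40$ vectors obtained by permuting the coordinates of $(\pm 1,\pm 1,0,0,0)$ (all sign choices). (2) $L_5$ is obtained from $D_5$ by removing the $8$ vectors whose fifth coordinate equals $1$ (namely the permutations of $(\pm1,0,0,0)$ in the first four coordinates, with fifth coordinate $1$) and adding the $8$ vectors $(\pm\tfrac12,\pm\tfrac12,\pm\tfrac12,\pm\tfrac12,1)$ having an odd number of minus signs among the first four coordinates. (3) $Q_5$ is obtained from $D_5$ by removing the $10$ vectors with coordinate sum $2$ (the permutations of $(1,1,0,0,0)$) and adding the $10$ vectors obtained by permuting the coordinates of $(-\tfrac15,-\tfrac15,\tfrac45,\tfrac45,\tfrac45)$. (These are the images of the $10$ vectors with coordinate sum $-2$ under the reflection $v\mapsto v-2\langle v,w\rangle w$, $w=(1,1,1,1,1)/\sqrt5$, across the hyperplane of coordinate sum $0$.) (4) $R_5$ is obtained from $L_5$ by removing the $10$ vectors of $L_5$ with coordinate sum $2$ and adding the $10$ vectors obtained by permuting the coordinates of $(-\tfrac15,-\tfrac15,\tfrac45,\tfrac45,\tfrac45)$. Then each of $D_5$, $L_5$, $Q_5$, $R_5$ is a kissing configuration of $40$ points in $\mathbb{R}^5$, and no two of them are isometric. In particular, there are at least four pairwise non-isometric kissing configurations of $40$ points in five dimensions.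
   Context: A kissing configuration in $\mathbb{R}^n$ is a finite set of vectors all of the same norm $r>0$ such that any two distinct vectors form an angle of at least $\pi/3$, i.e. have inner product at most $r^2/2$; here all vectors have squared norm $2$, so the condition is that distinct vectors have inner product at most $1$. Two configurations are isometric if some orthogonal transformation of $\mathbb{R}^n$ maps one onto the other. *)

theory Defs
  imports "HOL-Analysis.Analysis"
begin

text \<open>Vectors in R^5 are modelled as real^5; the five coordinates are
  v$1, v$2, v$3, v$4, v$5 (the index literals 1,...,5 of type 5 are the
  five distinct elements of the index type; v$5 is the fifth coordinate).\<close>

definition kissing_config :: "('a::real_inner) set \<Rightarrow> bool" where
  "kissing_config A \<longleftrightarrow> finite A \<and> (\<forall>v\<in>A. v \<bullet> v = 2) \<and>
     (\<forall>v\<in>A. \<forall>w\<in>A. v \<noteq> w \<longrightarrow> v \<bullet> w \<le> 1)"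

definition isometric :: "('a::real_inner) set \<Rightarrow> 'a set \<Rightarrow> bool" where
  "isometric A B \<longleftrightarrow> (\<exists>f. orthogonal_transformation f \<and> f ` A = B)"

definition coord_sum :: "real^5 \<Rightarrow> real" where
  "coord_sum v = (\<Sum>i\<in>UNIV. v $ i)"

definition D5 :: "(real^5) set" where
  "D5 = {v. (\<forall>i. v $ i \<in> {-1, 0, 1}) \<and> card {i. v $ i \<noteq> 0} = 2}"

definition half_vecs :: "(real^5) set" where
  "half_vecs = {v. (\<forall>i\<in>{1,2,3,4}. v $ i \<in> {-1/2, 1/2}) \<and> v $ 5 = 1 \<and>
                    odd (card {i\<in>{1,2,3,4::5}. v $ i < 0})}"

definition L5 :: "(real^5) set" where
  "L5 = (D5 - {v\<in>D5. v $ 5 = 1}) \<union> half_vecs"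

definition fifth_vecs :: "(real^5) set" where
  "fifth_vecs = {v. (\<forall>i. v $ i \<in> {-1/5, 4/5}) \<and> card {i. v $ i = 4/5} = 3}"

definition Q5 :: "(real^5) set" where
  "Q5 = (D5 - {v\<in>D5. coord_sum v = 2}) \<union> fifth_vecs"

definition R5 :: "(real^5) set" where
  "R5 = (L5 - {v\<in>L5. coord_sum v = 2}) \<union> fifth_vecs"

end

theory Submission imports Defs begin
type_synonym tup = "real \<times> real \<times> real \<times> real \<times> real"
definition dl :: "tup list" where "dl = [(- 10, - 10, 0, 0, 0), (- 10, 0, - 10, 0, 0), (- 10, 0, 0, - 10, 0), (- 10, 0, 0, 0, - 10), (- 10, 0, 0, 0, 10), (- 10, 0, 0, 10, 0), (- 10, 0, 10, 0, 0), (- 10, 10, 0, 0, 0), (0, - 10, - 10, 0, 0), (0, - 10, 0, - 10, 0), (0, - 10, 0, 0, - 10), (0, - 10, 0, 0, 10), (0, - 10, 0, 10, 0), (0, - 10, 10, 0, 0), (0, 0, - 10, - 10, 0), (0, 0, - 10, 0, - 10), (0, 0, - 10, 0, 10), (0, 0, - 10, 10, 0), (0, 0, 0, - 10, - 10), (0, 0, 0, - 10, 10), (0, 0, 0, 10, - 10), (0, 0, 0, 10, 10), (0, 0, 10, - 10, 0), (0, 0, 10, 0, - 10), (0, 0, 10, 0, 10), (0, 0, 10, 10, 0), (0, 10, - 10, 0, 0), (0, 10, 0, - 10, 0), (0, 10, 0, 0, - 10), (0, 10, 0, 0, 10), (0, 10, 0, 10, 0), (0, 10, 10, 0, 0), (10,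 - 10, 0, 0, 0), (10, 0, - 10, 0, 0), (10, 0, 0, - 10, 0), (10, 0, 0, 0, - 10), (10, 0, 0, 0, 10), (10, 0, 0, 10, 0), (10, 0, 10, 0, 0), (10, 10, 0, 0, 0)]"
definition hl :: "tup list" where "hl = [(- 5, - 5, - 5, 5, 10), (- 5, - 5, 5, - 5, 10), (- 5, 5, - 5, - 5, 10), (- 5, 5, 5, 5, 10), (5, - 5, - 5, - 5, 10), (5, - 5, 5, 5, 10), (5, 5, - 5, 5, 10), (5, 5, 5, - 5, 10)]"
definition fl :: "tup list" where "fl = [(- 2, - 2, 8, 8, 8), (- 2, 8, - 2, 8, 8), (- 2, 8, 8, - 2, 8), (- 2, 8, 8, 8, - 2), (8, - 2, - 2, 8, 8), (8, - 2, 8, - 2, 8), (8, - 2, 8, 8, - 2), (8, 8, - 2, - 2, 8), (8, 8, - 2, 8, - 2), (8, 8, 8, - 2, - 2)]"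

fun ip :: "tup \<Rightarrow> tup \<Rightarrow> real" where
  "ip (a,b,c,d,e) (a',b',c',d',e') = a*a'+b*b'+c*c'+d*d'+e*e'"

lemma exhaust_5:
  fixes x :: 5
  shows "x = 1 \<or> x = 2 \<or> x = 3 \<or> x = 4 \<or> x = 5"
proof (induct x)
  case (of_int z)
  then have "z = 0 \<or> z = 1 \<or> z = 2 \<or> z = 3 \<or> z = 4" by fastforce
  then show ?case by auto
qed
lemma forall_5: "(\<forall>i::5. P i) \<longleftrightarrow> P 1 \<and> P 2 \<and> P 3 \<and> P 4 \<and> P 5"
  by (metis exhaust_5)

lemma UNIV_5: "UNIV = {1, 2, 3, 4, 5::5}"
  using exhaust_5 by auto
lemma d5: "(1::5) \<noteq> 2" "(1::5) \<noteq> 3" "(1::5) \<noteq> 4" "(1::5) \<noteq> 5" "(2::5) \<noteq> 3" "(2::5) \<noteq> 4" "(2::5) \<noteq> 5" "(3::5) \<noteq> 4" "(3::5) \<noteq> 5" "(4::5) \<noteq> 5"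
  by simp_all
lemma sum5: "(\<Sum>i\<in>UNIV. f i) = f (1::5) + f 2 + f 3 + f 4 + f 5"
  apply (subst UNIV_5)
  apply (simp only: sum.insert finite.emptyI finite.insertI insert_iff empty_iff d5 simp_thms sum.empty)
  by (simp add: algebra_simps)

lemma card5: "card {i::5. P i} = (if P 1 then 1 else 0) + (if P 2 then 1 else 0) + (if P 3 then 1 else 0) + (if P 4 then 1 else 0) + (if P 5 then 1 else 0)"
proof -
  have "card {i::5. P i} = (\<Sum>i\<in>UNIV. if P i then 1 else 0)"
    by (simp add: sum.If_cases)
  then show ?thesis by (simp only: sum5)
qed

lemma card4: "card {i\<in>{1,2,3,4::5}. P i} = (if P 1 then 1 else 0) + (if P 2 then 1 else 0) + (if P 3 then 1 else 0) + (if P 4 then 1 else 0)"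
proof -
  have "card {i\<in>{1,2,3,4::5}. P i} = (\<Sum>i\<in>{1,2,3,4::5}. if P i then 1 else 0)"
    by (simp add: sum.If_cases Int_def conj_commute)
  also have "\<dots> = (if P 1 then 1 else 0) + (if P 2 then 1 else 0) + (if P 3 then 1 else 0) + (if P 4 then 1 else 0)"
    by (simp only: sum.insert finite.emptyI finite.insertI insert_iff empty_iff d5 simp_thms sum.empty add.assoc add_0_right)
  finally show ?thesis .
qed

definition tup :: "real^5 \<Rightarrow> tup" where
  "tup v = (10 * v$1, 10 * v$2, 10 * v$3, 10 * v$4, 10 * v$5)"

definition untup :: "tup \<Rightarrow> real^5" where
  "untup x = (case x of (a,b,c,d,e) \<Rightarrow> (\<chi> i. (if i = 1 then a else if i = 2 then b else if i = 3 then c else if i = 4 then d else e) / 10))"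

lemma tup_untup: "tup (untup x) = x"
  by (cases x) (simp add: tup_def untup_def d5)

lemma inner_tup: "v \<bullet> w = ip (tup v) (tup w) / 100"
  by (simp add: inner_vec_def sum5 tup_def)

lemma inj_tup: "inj tup"
  by (rule injI) (simp add: tup_def vec_eq_iff forall_5)
lemma D5_sub: "tup ` D5 \<subseteq> set dl"
proof
  fix x assume "x \<in> tup ` D5"
  then obtain v where v: "v \<in> D5" "x = tup v" by auto
  have c: "v$1 \<in> {-1,0,1}" "v$2 \<in> {-1,0,1}" "v$3 \<in> {-1,0,1}" "v$4 \<in> {-1,0,1}" "v$5 \<in> {-1,0,1}"
    using v(1) by (auto simp: D5_def)
  have k: "card {i. v$i \<noteq> 0} = 2" using v(1) by (simp add: D5_def)
  show "x \<in> set dl" using c k unfolding v(2) tup_def card5 dl_def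
    by (auto split: if_splits)
qed

lemma D5_sup: "set dl \<subseteq> tup ` D5"
proof -
  have "\<forall>x\<in>set dl. untup x \<in> D5"
    by (simp add: dl_def D5_def forall_5 card5 untup_def d5)
  then show ?thesis by (metis image_eqI subsetI tup_untup)
qed

lemma H_sub: "tup ` half_vecs \<subseteq> set hl"
proof
  fix x assume "x \<in> tup ` half_vecs"
  then obtain v where v: "v \<in> half_vecs" "x = tup v" by auto
  have c: "v$1 \<in> {-1/2,1/2}" "v$2 \<in> {-1/2,1/2}" "v$3 \<in> {-1/2,1/2}" "v$4 \<in> {-1/2,1/2}" "v$5 = 1"
    using v(1) by (auto simp: half_vecs_def)
  have k: "odd (card {i\<in>{1,2,3,4::5}. v$i < 0})" using v(1) by (simp add: half_vecs_def)
  show "x \<in> set hl" using c k unfolding v(2) tup_def card4 hl_def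
    by (auto split: if_splits)
qed

lemma H_sup: "set hl \<subseteq> tup ` half_vecs"
proof -
  have "\<forall>x\<in>set hl. untup x \<in> half_vecs"
    unfolding half_vecs_def mem_Collect_eq card4 by (simp add: hl_def untup_def d5)
  then show ?thesis by (metis image_eqI subsetI tup_untup)
qed

lemma F_sub: "tup ` fifth_vecs \<subseteq> set fl"
proof
  fix x assume "x \<in> tup ` fifth_vecs"
  then obtain v where v: "v \<in> fifth_vecs" "x = tup v" by auto
  have c: "v$1 \<in> {-1/5,4/5}" "v$2 \<in> {-1/5,4/5}" "v$3 \<in> {-1/5,4/5}" "v$4 \<in> {-1/5,4/5}" "v$5 \<in> {-1/5,4/5}"
    using v(1) by (auto simp: fifth_vecs_def)
  have k: "card {i. v$i = 4/5} = 3" using v(1) by (simp add: fifth_vecs_def)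
  show "x \<in> set fl" using c k unfolding v(2) tup_def card5 fl_def
    by (auto split: if_splits)
qed

lemma F_sup: "set fl \<subseteq> tup ` fifth_vecs"
proof -
  have "\<forall>x\<in>set fl. untup x \<in> fifth_vecs"
    by (simp add: fl_def fifth_vecs_def forall_5 card5 untup_def d5)
  then show ?thesis by (metis image_eqI subsetI tup_untup)
qed

lemma tD: "tup ` D5 = set dl" using D5_sub D5_sup by blast
lemma tH: "tup ` half_vecs = set hl" using H_sub H_sup by blast
lemma tF: "tup ` fifth_vecs = set fl" using F_sub F_sup by blast

fun c5 :: "tup \<Rightarrow> real" where "c5 (a,b,c,d,e) = e"
fun csum :: "tup \<Rightarrow> real" where "csum (a,b,c,d,e) = a+b+c+d+e"

lemma c5_tup: "(v$5 = 1) = (c5 (tup v) = 10)" by (simp add: tup_def)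
lemma csum_tup: "(coord_sum v = 2) = (csum (tup v) = 20)"
  by (simp add: tup_def coord_sum_def sum5) arith

lemma img_filter: "tup ` {v\<in>A. Q (tup v)} = {x\<in>tup ` A. Q x}" by auto

lemma img_diff: "tup ` (A - B) = tup ` A - tup ` B"
  using inj_tup by (simp add: image_set_diff)

definition lL where "lL = filter (\<lambda>x. c5 x \<noteq> 10) dl @ hl"
definition lQ where "lQ = filter (\<lambda>x. csum x \<noteq> 20) dl @ fl"
definition lR where "lR = filter (\<lambda>x. csum x \<noteq> 20) lL @ fl"

lemma tL: "tup ` L5 = set lL"
proof -
  have e: "L5 = (D5 - {v\<in>D5. c5 (tup v) = 10}) \<union> half_vecs" by (simp add: L5_def c5_tup)
  have "tup ` L5 = (tup ` D5 - {x\<in>tup ` D5. c5 x = 10}) \<union> tup ` half_vecs"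
    unfolding e image_Un img_diff img_filter[of D5 "\<lambda>x. c5 x = 10"] by (rule refl)
  then show ?thesis by (auto simp: tD tH lL_def)
qed

lemma tQ: "tup ` Q5 = set lQ"
proof -
  have e: "Q5 = (D5 - {v\<in>D5. csum (tup v) = 20}) \<union> fifth_vecs" by (simp add: Q5_def csum_tup)
  have "tup ` Q5 = (tup ` D5 - {x\<in>tup ` D5. csum x = 20}) \<union> tup ` fifth_vecs"
    unfolding e image_Un img_diff img_filter[of D5 "\<lambda>x. csum x = 20"] by (rule refl)
  then show ?thesis by (auto simp: tD tF lQ_def)
qed

lemma tR: "tup ` R5 = set lR"
proof -
  have e: "R5 = (L5 - {v\<in>L5. csum (tup v) = 20}) \<union> fifth_vecs" by (simp add: R5_def csum_tup)
  have "tup ` R5 = (tup ` L5 - {x\<in>tup ` L5. csum x = 20}) \<union> tup ` fifth_vecs"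
    unfolding e image_Un img_diff img_filter[of L5 "\<lambda>x. csum x = 20"] by (rule refl)
  then show ?thesis by (auto simp: tL tF lR_def)
qed

definition good :: "tup list \<Rightarrow> bool" where
  "good xs = (distinct xs \<and> length xs = 40 \<and> (\<forall>x\<in>set xs. ip x x = 200 \<and> (\<forall>y\<in>set xs. x = y \<or> ip x y \<le> 100)))"

lemma good_imp:
  assumes "tup ` A = set xs" "good xs"
  shows "kissing_config A \<and> card A = 40"
proof -
  have fin: "finite A" using assms(1) inj_tup
    by (metis finite_imageD finite_set inj_on_subset subset_UNIV)
  have "card A = card (tup ` A)" using inj_tup by (simp add: card_image inj_on_def)
  also have "\<dots> = 40" using assms by (simp add: good_def distinct_card)
  finally have c: "card A = 40" .
  have n: "\<forall>v\<in>A. v \<bullet> v = 2"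
  proof
    fix v assume "v \<in> A"
    then have "tup v \<in> set xs" using assms(1) by blast
    then show "v \<bullet> v = 2" using assms(2) by (simp add: good_def inner_tup)
  qed
  have p: "\<forall>v\<in>A. \<forall>w\<in>A. v \<noteq> w \<longrightarrow> v \<bullet> w \<le> 1"
  proof (intro ballI impI)
    fix v w assume "v \<in> A" "w \<in> A" "v \<noteq> w"
    then have "tup v \<in> set xs" "tup w \<in> set xs" "tup v \<noteq> tup w" using assms(1) inj_tup
      by (auto dest: injD)
    then show "v \<bullet> w \<le> 1" using assms(2) unfolding good_def inner_tup by fastforce
  qed
  show ?thesis using fin c n p by (simp add: kissing_config_def)
qed

lemma good_dl: "good dl" by (simp add: good_def dl_def)
lemma good_lL: "good lL" by (simp add: good_def lL_def dl_def hl_def)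
lemma good_lQ: "good lQ" by (simp add: good_def lQ_def dl_def fl_def)
lemma good_lR: "good lR" by (simp add: good_def lR_def lL_def dl_def hl_def fl_def)

definition antipodal :: "(real^5) set \<Rightarrow> bool" where
  "antipodal A = (\<forall>v\<in>A. - v \<in> A)"

definition hasip :: "real \<Rightarrow> (real^5) set \<Rightarrow> bool" where
  "hasip c A = (\<exists>v\<in>A. \<exists>w\<in>A. v \<bullet> w = c)"

lemma iso_anti:
  assumes "isometric A B" shows "antipodal A = antipodal B"
proof -
  obtain f where f: "orthogonal_transformation f" "f ` A = B"
    using assms by (auto simp: isometric_def)
  have lin: "linear f" using f(1) by (simp add: orthogonal_transformation)
  have inj: "inj f" using f(1) by (rule orthogonal_transformation_inj)
  have neg: "f (- v) = - f v" for v using lin by (rule linear_neg)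
  show ?thesis
  proof
    assume a: "antipodal A"
    show "antipodal B" unfolding antipodal_def
    proof
      fix w assume "w \<in> B"
      then obtain v where "v \<in> A" "w = f v" using f(2) by auto
      then show "- w \<in> B" using a f(2) neg unfolding antipodal_def by (metis image_eqI)
    qed
  next
    assume b: "antipodal B"
    show "antipodal A" unfolding antipodal_def
    proof
      fix v assume v: "v \<in> A"
      then have "- f v \<in> B" using b f(2) unfolding antipodal_def by blast
      then obtain u where "u \<in> A" "f u = - f v" using f(2) by auto
      then have "u = - v" using inj neg by (metis injD)
      then show "- v \<in> A" using \<open>u \<in> A\<close> by simp
    qed
  qed
qed

lemma iso_ip:
  assumes "isometric A B" shows "hasip c A = hasip c B"
proof -
  obtain f where f: "orthogonal_transformation f" "f ` A = B"
    using assms by (auto simp: isometric_def)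
  have ip: "f v \<bullet> f w = v \<bullet> w" for v w using f(1) unfolding orthogonal_transformation_def by blast
  show ?thesis unfolding hasip_def f(2)[symmetric]
  proof
    assume "\<exists>v\<in>A. \<exists>w\<in>A. v \<bullet> w = c"
    then obtain v w where "v \<in> A" "w \<in> A" "v \<bullet> w = c" by blast
    then show "\<exists>v\<in>f ` A. \<exists>w\<in>f ` A. v \<bullet> w = c" using ip by (metis image_eqI)
  next
    assume "\<exists>v\<in>f ` A. \<exists>w\<in>f ` A. v \<bullet> w = c"
    then obtain v w where "v \<in> A" "w \<in> A" "f v \<bullet> f w = c" by blast
    then show "\<exists>v\<in>A. \<exists>w\<in>A. v \<bullet> w = c" using ip by metis
  qed
qed

fun neg :: "tup \<Rightarrow> tup" where "neg (a,b,c,d,e) = (-a,-b,-c,-d,-e)"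

lemma tup_neg: "tup (- v) = neg (tup v)" by (simp add: tup_def)

lemma anti_tup: assumes "tup ` A = set xs" shows "antipodal A = (\<forall>x\<in>set xs. neg x \<in> set xs)"
proof -
  have "(- v \<in> A) = (tup (- v) \<in> tup ` A)" for v using inj_tup by (simp add: inj_image_mem_iff)
  then show ?thesis unfolding antipodal_def assms[symmetric] tup_neg by auto
qed

lemma hasip_tup: assumes "tup ` A = set xs" shows "hasip c A = (\<exists>x\<in>set xs. \<exists>y\<in>set xs. ip x y = 100 * c)"
  unfolding hasip_def assms[symmetric] inner_tup by (simp add: divide_eq_eq mult.commute)

lemma aD: "antipodal D5" by (simp add: anti_tup[OF tD] dl_def)
lemma aL: "\<not> antipodal L5" by (simp add: anti_tup[OF tL] lL_def dl_def hl_def)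
lemma aQ: "\<not> antipodal Q5" by (simp add: anti_tup[OF tQ] lQ_def dl_def fl_def)
lemma aR: "\<not> antipodal R5" by (simp add: anti_tup[OF tR] lR_def lL_def dl_def hl_def fl_def)
lemma hL: "\<not> hasip (-8/5) L5" by (simp add: hasip_tup[OF tL] lL_def dl_def hl_def)
lemma hQ: "hasip (-8/5) Q5" by (simp add: hasip_tup[OF tQ] lQ_def dl_def fl_def)
lemma hR: "hasip (-8/5) R5" by (simp add: hasip_tup[OF tR] lR_def lL_def dl_def hl_def fl_def)
lemma hQ2: "\<not> hasip (-1/2) Q5" by (simp add: hasip_tup[OF tQ] lQ_def dl_def fl_def)
lemma hR2: "hasip (-1/2) R5" by (simp add: hasip_tup[OF tR] lR_def lL_def dl_def hl_def fl_def)

lemma all4: "(\<forall>i<(4::nat). P i) = (P 0 \<and> P 1 \<and> P 2 \<and> P 3)"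
  by (auto simp: less_Suc_eq numeral_eq_Suc)

theorem mainTheorem1:
  shows "(\<forall>A\<in>{D5, L5, Q5, R5}. kissing_config A \<and> card A = 40) \<and>
         (\<forall>i<4. \<forall>j<4. i \<noteq> j \<longrightarrow> \<not> isometric ([D5, L5, Q5, R5] ! i) ([D5, L5, Q5, R5] ! j))"
proof
  show "\<forall>A\<in>{D5, L5, Q5, R5}. kissing_config A \<and> card A = 40"
    using good_imp[OF tD good_dl] good_imp[OF tL good_lL] good_imp[OF tQ good_lQ] good_imp[OF tR good_lR]
    by auto
  have n: "\<not> isometric D5 L5" "\<not> isometric D5 Q5" "\<not> isometric D5 R5"
    "\<not> isometric L5 D5" "\<not> isometric Q5 D5" "\<not> isometric R5 D5"
    "\<not> isometric L5 Q5" "\<not> isometric L5 R5" "\<not> isometric Q5 L5" "\<not> isometric R5 L5"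
    "\<not> isometric Q5 R5" "\<not> isometric R5 Q5"
    using iso_anti iso_ip aD aL aQ aR hL hQ hR hQ2 hR2 by metis+
  show "\<forall>i<4. \<forall>j<4. i \<noteq> j \<longrightarrow> \<not> isometric ([D5, L5, Q5, R5] ! i) ([D5, L5, Q5, R5] ! j)"
    unfolding all4 using n by (simp add: numeral_eq_Suc)
qed
end
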